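(* Let $H=(T_1,\dots,T_n,p_1,\dots,p_n)$ be a strategic game with a belief structure satisfying property A. Then, for the operator $\overline{GR}$ on the lattice of restrictions of $H$: (i) the largest fixpoint of $\overline{GR}$ exists and equals its outcome; (ii) $\overline{GR}$ is order independent; (iii) for every relaxation $R$ of $\overline{GR}$ and every ordinal $\alpha$, $\overline{GR}^{\alpha}\subseteq R^{\alpha}$.
   Context: A strategic game $H=(T_1,\dots,T_n,p_1,\dots,p_n)$, $n>1$, has nonempty strategy sets $T_i$ and payoffs $p_i:T_1\times\dots\times T_n\to\mathbb R$. A restriction of $H$ is $G=(S_1,\dots,S_n)$ with each $S_i\subseteq T_i$ (possibly empty); restrictions form a complete lattice under componentwise inclusion with top element $H=(T_1,\dots,T_n)$, meets/joins being componentwise intersections/unions. A belief structure assigns to each player $i$ a nonempty set $\mathcal B_i$ of beliefs, an expected payoff $p_i:T_i\times\mathcal B_i\to\mathbb R$, and for each restriction $G$ a set $\mathcal B_i\,\dot\cap\,G\subseteq\mathcal B_i$ (beliefs of $i$ in $G$), with $\mathcal B_i\,\dot\cap\,H=\mathcal B_i$. Property A: if $G_1\subseteq G_2\subseteq H$ then $\mathcal B_i\,\dot\cap\,G_1\subseteq\mathcal B_i\,\dot\cap\,G_2$ for all $i$. For $G=(S_1,\dots,S_n)$ and $\mu_i\in\mathcal B_i$, $s_i\in T_i$ is a best response to $\mu_i$ in $G$, written $s_i\in BR_G(\mu_i)$, if $p_i(s_i,\mu_i)\ge p_i(s_i',\mu_i)$ for all $s_i'\in S_i$ (note $s_i$ need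 not lie in $S_i$). The operator $GR$ maps $G$ to $(S_1',\dots,S_n')$ with $S_i':=\{s_i\in T_i\mid \exists\mu_i\in\mathcal B_i\,\dot\cap\,G:\ s_i\in BR_H(\mu_i)\}$, and $\overline{GR}(G):=GR(G)\cap G$. Operator notions on a complete lattice: fixpoint $T(G)=G$; monotonic: $G_1\subseteq G_2\Rightarrow T(G_1)\subseteq T(G_2)$; iterations $T^0:=\top$, $T^{\alpha+1}:=T(T^\alpha)$, $T^\beta:=\bigcap_{\alpha<\beta}T^\alpha$ for limit $\beta$; outcome $T^{\alpha_T}$ where $\alpha_T$ is the least $\alpha$ with $T^{\alpha+1}=T^\alpha$. $R$ is a relaxation of $T$ if for all ordinals $\alpha$: (1) $T(R^\alpha)\subseteq R(R^\alpha)$; (2) if $T(R^\alpha)\subseteq R^\alpha$ then $R(R^\alpha)\subseteq R^\alpha$; (3) if $R^\alpha$ is a fixpoint of $R$ then it is a fixpoint of $T$. $T$ is order independent if the set of outcomes of relaxations of $T$ has at most one element. *)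

theory Defs
  imports Complex_Main
begin

(* Players are 0..<n.  A strategic game is given by its strategy sets
   T :: nat => 's set, normalised so that T i = {} for i >= n.
   A restriction is G :: nat => 's set with G i \<subseteq> T i (and G i = {} for i >= n);
   the lattice order is the pointwise order \<le> on functions, top element T. *)

definition strategic_game :: "nat \<Rightarrow> (nat \<Rightarrow> 's set) \<Rightarrow> bool" where
  "strategic_game n T \<longleftrightarrow> 1 < n \<and> (\<forall>i<n. T i \<noteq> {}) \<and> (\<forall>i. n \<le> i \<longrightarrow> T i = {})"

definition is_restr :: "nat \<Rightarrow> (nat \<Rightarrow> 's set) \<Rightarrow> (nat \<Rightarrow> 's set) \<Rightarrow> bool" where
  "is_restr n T G \<longleftrightarrow> (\<forall>i<n. G i \<subseteq> T i) \<and> (\<forall>i. n \<le> i \<longrightarrow> G i = {})"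

definition is_operator :: "nat \<Rightarrow> (nat \<Rightarrow> 's set) \<Rightarrow> ((nat \<Rightarrow> 's set) \<Rightarrow> (nat \<Rightarrow> 's set)) \<Rightarrow> bool" where
  "is_operator n T R \<longleftrightarrow> (\<forall>G. is_restr n T G \<longrightarrow> is_restr n T (R G))"

(* belief structure: beliefs B i (nonempty), beliefs in G: Bin i G \<subseteq> B i, Bin i T = B i.
   The expected payoff ep :: nat => 's => 'b => real is an arbitrary function. *)
definition belief_structure ::
  "nat \<Rightarrow> (nat \<Rightarrow> 's set) \<Rightarrow> (nat \<Rightarrow> 'b set) \<Rightarrow> (nat \<Rightarrow> (nat \<Rightarrow> 's set) \<Rightarrow> 'b set) \<Rightarrow> bool" where
  "belief_structure n T B Bin \<longleftrightarrow>
     (\<forall>i<n. B i \<noteq> {}) \<and>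
     (\<forall>i<n. \<forall>G. is_restr n T G \<longrightarrow> Bin i G \<subseteq> B i) \<and>
     (\<forall>i<n. Bin i T = B i)"

definition property_A ::
  "nat \<Rightarrow> (nat \<Rightarrow> 's set) \<Rightarrow> (nat \<Rightarrow> (nat \<Rightarrow> 's set) \<Rightarrow> 'b set) \<Rightarrow> bool" where
  "property_A n T Bin \<longleftrightarrow>
     (\<forall>G1 G2. is_restr n T G1 \<and> is_restr n T G2 \<and> G1 \<le> G2 \<longrightarrow> (\<forall>i<n. Bin i G1 \<subseteq> Bin i G2))"

(* s is a best response of player i to belief mu in restriction G (s need not lie in G i) *)
definition best_resp :: "(nat \<Rightarrow> 's \<Rightarrow> 'b \<Rightarrow> real) \<Rightarrow> nat \<Rightarrow> (nat \<Rightarrow> 's set) \<Rightarrow> 'b \<Rightarrow> 's \<Rightarrow> bool" where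
  "best_resp ep i G mu s \<longleftrightarrow> (\<forall>s'\<in>G i. ep i s' mu \<le> ep i s mu)"

definition GR :: "nat \<Rightarrow> (nat \<Rightarrow> 's set) \<Rightarrow> (nat \<Rightarrow> 's \<Rightarrow> 'b \<Rightarrow> real)
    \<Rightarrow> (nat \<Rightarrow> (nat \<Rightarrow> 's set) \<Rightarrow> 'b set) \<Rightarrow> (nat \<Rightarrow> 's set) \<Rightarrow> (nat \<Rightarrow> 's set)" where
  "GR n T ep Bin G = (\<lambda>i. if i < n then {s \<in> T i. \<exists>mu\<in>Bin i G. best_resp ep i T mu s} else {})"

definition GRbar :: "nat \<Rightarrow> (nat \<Rightarrow> 's set) \<Rightarrow> (nat \<Rightarrow> 's \<Rightarrow> 'b \<Rightarrow> real)
    \<Rightarrow> (nat \<Rightarrow> (nat \<Rightarrow> 's set) \<Rightarrow> 'b set) \<Rightarrow> (nat \<Rightarrow> 's set) \<Rightarrow> (nat \<Rightarrow> 's set)" where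
  "GRbar n T ep Bin G = (\<lambda>i. GR n T ep Bin G i \<inter> G i)"

(* Transfinite iteration of R starting from the top T, indexed by elements of a
   well-ordered type 'o (element x represents the ordinal = order type of {y. y < x}).
   Successor x of y:  T^x = R (T^y);  otherwise (0 or limit): meet of all earlier
   iterates in the lattice of restrictions (the meet of the empty family is T). *)
definition iter :: "(nat \<Rightarrow> 's set) \<Rightarrow> ((nat \<Rightarrow> 's set) \<Rightarrow> (nat \<Rightarrow> 's set)) \<Rightarrow> 'o::wellorder \<Rightarrow> (nat \<Rightarrow> 's set)" where
  "iter T R = wfrec {(y, x). y < x}
     (\<lambda>f x. if (\<exists>y. y < x \<and> (\<forall>z. y < z \<longrightarrow> x \<le> z))
            then R (f (THE y. y < x \<and> (\<forall>z. y < z \<longrightarrow> x \<le> z)))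
            else (\<lambda>i. T i \<inter> (\<Inter>y\<in>{y. y < x}. f y i)))"

(* x is the outcome index alpha_R: least index with R^(x+1) = R^x, i.e. R(R^x) = R^x *)
definition outcome_at :: "(nat \<Rightarrow> 's set) \<Rightarrow> ((nat \<Rightarrow> 's set) \<Rightarrow> (nat \<Rightarrow> 's set)) \<Rightarrow> 'o::wellorder \<Rightarrow> bool" where
  "outcome_at T R x \<longleftrightarrow> R (iter T R x) = iter T R x \<and> (\<forall>y<x. R (iter T R y) \<noteq> iter T R y)"

definition relax_cond :: "(nat \<Rightarrow> 's set) \<Rightarrow> ((nat \<Rightarrow> 's set) \<Rightarrow> (nat \<Rightarrow> 's set))
    \<Rightarrow> ((nat \<Rightarrow> 's set) \<Rightarrow> (nat \<Rightarrow> 's set)) \<Rightarrow> 'o::wellorder \<Rightarrow> bool" where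
  "relax_cond T Op R x \<longleftrightarrow>
     Op (iter T R x) \<le> R (iter T R x) \<and>
     (Op (iter T R x) \<le> iter T R x \<longrightarrow> R (iter T R x) \<le> iter T R x) \<and>
     (R (iter T R x) = iter T R x \<longrightarrow> Op (iter T R x) = iter T R x)"

end

theory Submission
  imports Defs
begin

lemma iter_eq:
  "iter T R (x::'o::wellorder) = (if (\<exists>y. y < x \<and> (\<forall>z. y < z \<longrightarrow> x \<le> z))
     then R (iter T R (THE y. y < x \<and> (\<forall>z. y < z \<longrightarrow> x \<le> z)))
     else (\<lambda>i. T i \<inter> (\<Inter>y\<in>{y. y < x}. iter T R y i)))"
proof -
  have w: "wf {(y, x::'o). y < x}" by (rule wf)
  show ?thesis
  proof (cases "\<exists>y. y < x \<and> (\<forall>z. y < z \<longrightarrow> x \<le> z)")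
    case True
    then obtain y where y: "y < x" "\<forall>z. y < z \<longrightarrow> x \<le> z" by blast
    have th: "(THE y. y < x \<and> (\<forall>z. y < z \<longrightarrow> x \<le> z)) = y"
    proof (rule the_equality)
      show "y < x \<and> (\<forall>z. y < z \<longrightarrow> x \<le> z)" using y by blast
    next
      fix y' assume "y' < x \<and> (\<forall>z. y' < z \<longrightarrow> x \<le> z)"
      then show "y' = y" using y by (meson leD linorder_neqE)
    qed
    show ?thesis
      unfolding iter_def
      apply (subst wfrec[OF w])
      apply (simp only: if_P[OF True] th)
      using y by (simp add: cut_apply)
  next
    case False
    show ?thesis
      unfolding iter_def
      apply (subst wfrec[OF w])
      apply (simp only: if_not_P[OF False])
      apply (rule ext)
      by (auto simp: cut_apply)
  qed
qed

lemma iter_succ: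
  assumes "y < (x::'o::wellorder)" "\<forall>z. y < z \<longrightarrow> x \<le> z"
  shows "iter T R x = R (iter T R y)"
proof -
  have th: "(THE y. y < x \<and> (\<forall>z. y < z \<longrightarrow> x \<le> z)) = y"
  proof (rule the_equality)
    show "y < x \<and> (\<forall>z. y < z \<longrightarrow> x \<le> z)" using assms by blast
  next
    fix y' assume "y' < x \<and> (\<forall>z. y' < z \<longrightarrow> x \<le> z)"
    then show "y' = y" using assms by (meson leD linorder_neqE)
  qed
  show ?thesis using assms th by (subst iter_eq) auto
qed

lemma iter_lim:
  assumes "\<not> (\<exists>y. y < (x::'o::wellorder) \<and> (\<forall>z. y < z \<longrightarrow> x \<le> z))"
  shows "iter T R x = (\<lambda>i. T i \<inter> (\<Inter>y\<in>{y. y < x}. iter T R y i))"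
  using assms by (subst iter_eq) auto

lemma iter_restr:
  assumes "is_operator n T R" "is_restr n T T"
  shows "is_restr n T (iter T R (x::'o::wellorder))"
proof (induction x rule: less_induct)
  case (less x)
  show ?case
  proof (cases "\<exists>y. y < x \<and> (\<forall>z. y < z \<longrightarrow> x \<le> z)")
    case True
    then obtain y where y: "y < x" "\<forall>z. y < z \<longrightarrow> x \<le> z" by blast
    show ?thesis using iter_succ[OF y, of T R] less[OF y(1)] assms(1)
      unfolding is_operator_def by simp
  next
    case False
    show ?thesis using iter_lim[OF False, of T R] assms(2) unfolding is_restr_def by auto
  qed
qed

lemma iter_decr:
  assumes "is_operator n T R" "is_restr n T T" "\<forall>G. is_restr n T G \<longrightarrow> R G \<le> G"
  shows "(x::'o::wellorder) \<le> x' \<Longrightarrow> iter T R x' \<le> iter T R x"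
proof (induction x' rule: less_induct)
  case (less x')
  show ?case
  proof (cases "x = x'")
    case True then show ?thesis by simp
  next
    case False
    then have xl: "x < x'" using less.prems by simp
    show ?thesis
    proof (cases "\<exists>y. y < x' \<and> (\<forall>z. y < z \<longrightarrow> x' \<le> z)")
      case True
      then obtain y where y: "y < x'" "\<forall>z. y < z \<longrightarrow> x' \<le> z" by blast
      have "x \<le> y" using y xl by (meson leI leD)
      then have "iter T R y \<le> iter T R x" using less.IH[OF y(1)] by blast
      moreover have "R (iter T R y) \<le> iter T R y"
        using assms(3) iter_restr[OF assms(1,2)] by blast
      then have "iter T R x' \<le> iter T R y"
        using iter_succ[OF y, of T R] by simp
      ultimately show ?thesis by (rule order_trans[rotated])
    next
      case False
      show ?thesis using iter_lim[OF False, of T R] xl unfolding le_fun_def by auto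
    qed
  qed
qed

lemma iter_le_gen:
  assumes "\<And>y. iter T Op (y::'o::wellorder) \<le> iter T R y \<Longrightarrow> Op (iter T Op y) \<le> R (iter T R y)"
  shows "iter T Op (x::'o) \<le> iter T R x"
proof (induction x rule: less_induct)
  case (less x)
  show ?case
  proof (cases "\<exists>y. y < x \<and> (\<forall>z. y < z \<longrightarrow> x \<le> z)")
    case True
    then obtain y where y: "y < x" "\<forall>z. y < z \<longrightarrow> x \<le> z" by blast
    show ?thesis using iter_succ[OF y, of T Op] iter_succ[OF y, of T R] assms[OF less[OF y(1)]] by simp
  next
    case False
    show ?thesis unfolding iter_lim[OF False, of T Op] iter_lim[OF False, of T R]
      using less by (auto simp: le_fun_def)
  qed
qed


theorem mainTheorem5:
  fixes n :: nat and T :: "nat \<Rightarrow> 's set" and B :: "nat \<Rightarrow> 'b set"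
    and ep :: "nat \<Rightarrow> 's \<Rightarrow> 'b \<Rightarrow> real" and Bin :: "nat \<Rightarrow> (nat \<Rightarrow> 's set) \<Rightarrow> 'b set"
  assumes "strategic_game n T"
    and "belief_structure n T B Bin"
    and "property_A n T Bin"
  shows
    "(\<exists>F. is_restr n T F \<and> GRbar n T ep Bin F = F \<and>
          (\<forall>G. is_restr n T G \<and> GRbar n T ep Bin G = G \<longrightarrow> G \<le> F) \<and>
          (\<forall>x::'o::wellorder. outcome_at T (GRbar n T ep Bin) x \<longrightarrow> iter T (GRbar n T ep Bin) x = F) \<and>
          ((\<nexists>f::'o \<Rightarrow> (nat \<Rightarrow> 's set). inj f) \<longrightarrow> (\<exists>x::'o. outcome_at T (GRbar n T ep Bin) x)))
     \<and>
     (\<forall>R1 R2 (x1::'o) (x2::'o).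
        is_operator n T R1 \<and> (\<forall>y::'o. relax_cond T (GRbar n T ep Bin) R1 y) \<and> outcome_at T R1 x1 \<and>
        is_operator n T R2 \<and> (\<forall>y::'o. relax_cond T (GRbar n T ep Bin) R2 y) \<and> outcome_at T R2 x2
        \<longrightarrow> iter T R1 x1 = iter T R2 x2)
     \<and>
     (\<forall>R. is_operator n T R \<and> (\<forall>y::'o. relax_cond T (GRbar n T ep Bin) R y) \<longrightarrow>
        (\<forall>x::'o. iter T (GRbar n T ep Bin) x \<le> iter T R x))"

proof -
  let ?O = "GRbar n T ep Bin"
  have TR: "is_restr n T T" using assms(1) unfolding strategic_game_def is_restr_def by auto
  have opO: "is_operator n T ?O"
    unfolding is_operator_def is_restr_def GRbar_def GR_def by auto
  have contr: "\<forall>G. is_restr n T G \<longrightarrow> ?O G \<le> G"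
    unfolding GRbar_def le_fun_def by auto
  have mono: "?O G1 \<le> ?O G2" if "is_restr n T G1" "is_restr n T G2" "G1 \<le> G2" for G1 G2
  proof -
    have "\<forall>i<n. Bin i G1 \<subseteq> Bin i G2" using assms(3) that unfolding property_A_def by blast
    then have "GR n T ep Bin G1 i \<subseteq> GR n T ep Bin G2 i" for i
      unfolding GR_def by (cases "i < n") auto
    then show ?thesis using that(3) unfolding GRbar_def le_fun_def by blast
  qed
  define F where "F = (\<lambda>i. \<Union>{G i | G. is_restr n T G \<and> ?O G = G})"
  have FR: "is_restr n T F" unfolding F_def is_restr_def
    by (intro conjI allI impI) blast+
  have Fmax: "G \<le> F" if "is_restr n T G" "?O G = G" for G
    using that unfolding F_def le_fun_def by blast
  have "F \<le> ?O F"
    unfolding le_fun_def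
  proof (intro allI subsetI)
    fix i s assume "s \<in> F i"
    then obtain G where G: "is_restr n T G" "?O G = G" "s \<in> G i" unfolding F_def by blast
    have "?O G \<le> ?O F" using mono[OF G(1) FR Fmax[OF G(1,2)]] .
    then show "s \<in> ?O F i" using G unfolding le_fun_def by (metis subsetD)
  qed
  then have Ffix: "?O F = F" using contr FR by (simp add: order_antisym)
  have Fle: "F \<le> iter T ?O x" for x :: 'o
  proof (induction x rule: less_induct)
    case (less x)
    show ?case
    proof (cases "\<exists>y. y < x \<and> (\<forall>z. y < z \<longrightarrow> x \<le> z)")
      case True
      then obtain y where y: "y < x" "\<forall>z. y < z \<longrightarrow> x \<le> z" by blast
      have "F \<le> ?O (iter T ?O y)"
        using mono[OF FR iter_restr[OF opO TR] less[OF y(1)]] Ffix by simp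
      then show ?thesis using iter_succ[OF y, of T ?O] by simp
    next
      case False
      have "F i \<subseteq> T i" for i using FR unfolding is_restr_def by (cases "i < n") auto
      then show ?thesis unfolding iter_lim[OF False, of T ?O]
        using less by (auto simp: le_fun_def; blast)
    qed
  qed
  have outF: "iter T ?O x = F" if "outcome_at T ?O x" for x :: 'o
    using that Fle[of x] Fmax[OF iter_restr[OF opO TR, of x]] unfolding outcome_at_def
    by (meson order_antisym)
  have exo: "\<exists>x::'o. outcome_at T ?O x" if ninj: "\<nexists>f::'o \<Rightarrow> (nat \<Rightarrow> 's set). inj f"
  proof (rule ccontr)
    assume no: "\<not> (\<exists>x::'o. outcome_at T ?O x)"
    have nf: "?O (iter T ?O x) \<noteq> iter T ?O x" for x :: 'o
    proof
      assume h: "?O (iter T ?O x) = iter T ?O x"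
      define x0 where "x0 = (LEAST x::'o. ?O (iter T ?O x) = iter T ?O x)"
      have "?O (iter T ?O x0) = iter T ?O x0" unfolding x0_def using h by (rule LeastI)
      moreover have "\<forall>y<x0. ?O (iter T ?O y) \<noteq> iter T ?O y" unfolding x0_def
        using not_less_Least by blast
      ultimately show False using no unfolding outcome_at_def by blast
    qed
    have "inj (iter T ?O :: 'o \<Rightarrow> _)"
    proof (rule injI)
      have key: "iter T ?O a \<noteq> iter T ?O b" if "a < b" for a b :: 'o
      proof
        assume eq: "iter T ?O a = iter T ?O b"
        define s where "s = (LEAST z::'o. a < z)"
        have as: "a < s" unfolding s_def using that by (rule LeastI)
        have sb: "s \<le> b" unfolding s_def using that by (rule Least_le)
        have sm: "\<forall>z. a < z \<longrightarrow> s \<le> z" unfolding s_def by (auto intro: Least_le)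
        have "iter T ?O s = ?O (iter T ?O a)" by (rule iter_succ[OF as sm])
        moreover have "iter T ?O b \<le> iter T ?O s" by (rule iter_decr[OF opO TR contr sb])
        moreover have "iter T ?O s \<le> iter T ?O a" by (rule iter_decr[OF opO TR contr]) (use as in simp)
        ultimately have "?O (iter T ?O a) = iter T ?O a" using eq by (simp add: order_antisym)
        then show False using nf by blast
      qed
      fix a b :: 'o assume "iter T ?O a = iter T ?O b"
      then show "a = b" using key key[symmetric] by (metis linorder_neqE)
    qed
    then show False using ninj by blast
  qed
  have part3: "\<forall>R. is_operator n T R \<and> (\<forall>y::'o. relax_cond T ?O R y) \<longrightarrow>
        (\<forall>x::'o. iter T ?O x \<le> iter T R x)"
  proof (intro allI impI)
    fix R x assume h: "is_operator n T R \<and> (\<forall>y::'o. relax_cond T ?O R y)"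
    show "iter T ?O (x::'o) \<le> iter T R x"
    proof (rule iter_le_gen)
      fix y :: 'o
      assume le: "iter T ?O y \<le> iter T R y"
      have "?O (iter T ?O y) \<le> ?O (iter T R y)"
        by (rule mono[OF iter_restr[OF opO TR] iter_restr[OF _ TR]]) (use h le in auto)
      also have "\<dots> \<le> R (iter T R y)" using h unfolding relax_cond_def by blast
      finally show "?O (iter T ?O y) \<le> R (iter T R y)" .
    qed
  qed
  have relF: "iter T R x = F" if "is_operator n T R" "\<forall>y::'o. relax_cond T ?O R y" "outcome_at T R x" for R and x :: 'o
  proof -
    have "R (iter T R x) = iter T R x" using that(3) unfolding outcome_at_def by blast
    then have "?O (iter T R x) = iter T R x" using that(2) unfolding relax_cond_def by blast
    then have "iter T R x \<le> F" using Fmax iter_restr[OF that(1) TR] by blast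
    moreover have "F \<le> iter T R x" using Fle[of x] part3 that by (meson order_trans)
    ultimately show ?thesis by (simp add: order_antisym)
  qed
  have part2: "\<forall>R1 R2 (x1::'o) (x2::'o).
        is_operator n T R1 \<and> (\<forall>y::'o. relax_cond T ?O R1 y) \<and> outcome_at T R1 x1 \<and>
        is_operator n T R2 \<and> (\<forall>y::'o. relax_cond T ?O R2 y) \<and> outcome_at T R2 x2
        \<longrightarrow> iter T R1 x1 = iter T R2 x2"
  proof (intro allI impI)
    fix R1 R2 and x1 x2 :: 'o
    assume h: "is_operator n T R1 \<and> (\<forall>y::'o. relax_cond T ?O R1 y) \<and> outcome_at T R1 x1 \<and>
        is_operator n T R2 \<and> (\<forall>y::'o. relax_cond T ?O R2 y) \<and> outcome_at T R2 x2"
    have "iter T R1 x1 = F" using h by (intro relF) auto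
    moreover have "iter T R2 x2 = F" using h by (intro relF) auto
    ultimately show "iter T R1 x1 = iter T R2 x2" by simp
  qed
  have part1: "\<exists>F. is_restr n T F \<and> ?O F = F \<and>
          (\<forall>G. is_restr n T G \<and> ?O G = G \<longrightarrow> G \<le> F) \<and>
          (\<forall>x::'o. outcome_at T ?O x \<longrightarrow> iter T ?O x = F) \<and>
          ((\<nexists>f::'o \<Rightarrow> (nat \<Rightarrow> 's set). inj f) \<longrightarrow> (\<exists>x::'o. outcome_at T ?O x))"
    using FR Ffix Fmax outF exo by blast
  show ?thesis using part1 part2 part3 by blast
qed

end
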